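(* Under the LP mechanism (in either its fractional or its randomized interpretation), truthfully reporting the execution times is a weakly dominant strategy for every machine: for every true cost matrix $\mathbf t$, every machine $i$ and every declaration matrix $\hat{\mathbf t}$, $C_i(\mathbf t_i,\hat{\mathbf t}_{-i})\le C_i(\hat{\mathbf t})$.
   Context: Scheduling without payments: $n$ machines, $m$ tasks; machine $i$ has private true times $t_{i,j}\ge0$ and declares $\hat t_{i,j}\ge0$; $\mathbf t_i$ denotes row $i$ and $(\mathbf x_i,\hat{\mathbf t}_{-i})$ the matrix where row $i$ of $\hat{\mathbf t}$ is replaced by $\mathbf x_i$. Machines are bound by their declarations: a machine assigned (a fraction of, or with some probability) task $j$ executes it for time $\max\{\hat t_{i,j},t_{i,j}\}$ (times the fraction). Given a mechanism outputting $\alpha_{i,j}(\hat{\mathbf t})\in[0,1]$ with $\sum_i\alpha_{i,j}=1$ for each $j$ (interpreted either as the fraction of task $j$ given to machine $i$, or as the probability that machine $i$ gets task $j$), the cost of machine $i$ is $C_i(\hat{\mathbf t})=\sum_j\alpha_{i,j}(\hat{\mathbf t})\max\{\hat t_{i,j},t_{i,j}\}$. The LP mechanism, on declarations $\hat{\mathbf t}$, outputs an optimal solution $\alpha(\hat{\mathbf t})$ (selected by some fixed rule among optimal solutions, e.g.\ lexicographically smallest) of the linear program: minimize $\mu$ subject to $\sum_i\alpha_{i,j}=1$ for all $j$, $\mu-\sum_j\alpha_{i,j}\hat t_{i,j}\ge0$ for all $i$, and $\alpha_{i,j}\ge0$ for all $i,j$. The LP fractional mechanism interprets $\alpha$ as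 fractions; the LP randomized mechanism interprets $\alpha$ as allocation probabilities. *)

theory Defs
  imports Complex_Main
begin

text \<open>Machines are indexed by i < n, tasks by j < m; matrices are nat => nat => real.\<close>

definition lp_feasible :: "nat \<Rightarrow> nat \<Rightarrow> (nat \<Rightarrow> nat \<Rightarrow> real) \<Rightarrow> (nat \<Rightarrow> nat \<Rightarrow> real) \<Rightarrow> real \<Rightarrow> bool" where
  "lp_feasible n m d \<alpha> \<mu> \<longleftrightarrow>
     (\<forall>j<m. (\<Sum>i<n. \<alpha> i j) = 1) \<and>
     (\<forall>i<n. \<mu> - (\<Sum>j<m. \<alpha> i j * d i j) \<ge> 0) \<and>
     (\<forall>i<n. \<forall>j<m. \<alpha> i j \<ge> 0)"

definition lp_optimal :: "nat \<Rightarrow> nat \<Rightarrow> (nat \<Rightarrow> nat \<Rightarrow> real) \<Rightarrow> (nat \<Rightarrow> nat \<Rightarrow> real) \<Rightarrow> bool" where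
  "lp_optimal n m d \<alpha> \<longleftrightarrow>
     (\<exists>\<mu>. lp_feasible n m d \<alpha> \<mu> \<and> (\<forall>\<beta> \<nu>. lp_feasible n m d \<beta> \<nu> \<longrightarrow> \<mu> \<le> \<nu>))"

definition LP_mechanism :: "nat \<Rightarrow> nat \<Rightarrow> ((nat \<Rightarrow> nat \<Rightarrow> real) \<Rightarrow> (nat \<Rightarrow> nat \<Rightarrow> real)) \<Rightarrow> bool" where
  "LP_mechanism n m sel \<longleftrightarrow>
     (\<forall>d. (\<forall>i<n. \<forall>j<m. d i j \<ge> 0) \<longrightarrow> lp_optimal n m d (sel d))"

text \<open>Cost of machine i with true times t, declarations d and allocation alpha
  (fractions, or probabilities in which case it is the expected cost).\<close>
definition mcost :: "nat \<Rightarrow> (nat \<Rightarrow> nat \<Rightarrow> real) \<Rightarrow> (nat \<Rightarrow> nat \<Rightarrow> real) \<Rightarrow> (nat \<Rightarrow> nat \<Rightarrow> real) \<Rightarrow> nat \<Rightarrow> real" where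
  "mcost m t d \<alpha> i = (\<Sum>j<m. \<alpha> i j * max (d i j) (t i j))"

definition replace_row :: "(nat \<Rightarrow> nat \<Rightarrow> real) \<Rightarrow> nat \<Rightarrow> (nat \<Rightarrow> real) \<Rightarrow> (nat \<Rightarrow> nat \<Rightarrow> real)" where
  "replace_row d i x = (\<lambda>k. if k = i then x else d k)"

end

theory Submission
  imports Defs
begin

lemma tight:
  assumes feas: "lp_feasible n m d \<alpha> \<mu>"
    and opt: "\<forall>\<beta> \<nu>. lp_feasible n m d \<beta> \<nu> \<longrightarrow> \<mu> \<le> \<nu>"
    and dnn: "\<forall>k<n. \<forall>j<m. d k j \<ge> 0" and i: "i < n"
  shows "\<mu> \<le> (\<Sum>j<m. \<alpha> i j * d i j)"
proof (rule ccontr)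
  define L where "L = (\<Sum>j<m. \<alpha> i j * d i j)"
  define D where "D = (\<Sum>j<m. d i j)"
  assume "\<not> \<mu> \<le> (\<Sum>j<m. \<alpha> i j * d i j)"
  hence Lm: "L < \<mu>" by (simp add: L_def)
  have anz: "\<forall>k<n. \<forall>j<m. \<alpha> k j \<ge> 0" and sum1: "\<forall>j<m. (\<Sum>k<n. \<alpha> k j) = 1"
    and load: "\<forall>k<n. (\<Sum>j<m. \<alpha> k j * d k j) \<le> \<mu>"
    using feas by (auto simp: lp_feasible_def)
  have L0: "L \<ge> 0" unfolding L_def using anz dnn i by (auto intro!: sum_nonneg)
  have D0: "D \<ge> 0" unfolding D_def using dnn i by (auto intro!: sum_nonneg)
  have aleq1: "\<alpha> i j \<le> 1" if "j < m" for j
  proof -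
    have "\<alpha> i j \<le> (\<Sum>k<n. \<alpha> k j)"
      using i that anz by (intro member_le_sum) auto
    thus ?thesis using sum1 that by simp
  qed
  define e where "e = (\<mu> - L) / (2 * (D + \<mu> + 1))"
  have mu0: "\<mu> > 0" using Lm L0 by linarith
  have e0: "e > 0" unfolding e_def using Lm D0 mu0 by (auto intro!: divide_pos_pos)
  have e1: "e \<le> 1/2" unfolding e_def using L0 D0 mu0 by (simp add: field_simps)
  have eD: "e * D < \<mu> - L"
  proof -
    have "e * D = (\<mu> - L) * (D / (2 * (D + \<mu> + 1)))" unfolding e_def by simp
    also have "\<dots> < (\<mu> - L) * 1"
      using Lm D0 mu0 by (intro mult_strict_left_mono) (auto simp: field_simps)
    finally show ?thesis by simp
  qed
  define \<beta> where "\<beta> = (\<lambda>k j. if k = i then \<alpha> i j + e * (1 - \<alpha> i j) else (1 - e) * \<alpha> k j)"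
  define \<nu> where "\<nu> = max ((1 - e) * \<mu>) (L + e * D)"
  have "lp_feasible n m d \<beta> \<nu>"
    unfolding lp_feasible_def
  proof (intro conjI allI impI)
    fix j assume j: "j < m"
    have "(\<Sum>k<n. \<beta> k j) = \<beta> i j + (\<Sum>k\<in>{..<n}-{i}. \<beta> k j)"
      using i by (simp add: sum.remove)
    also have "(\<Sum>k\<in>{..<n}-{i}. \<beta> k j) = (1 - e) * (\<Sum>k\<in>{..<n}-{i}. \<alpha> k j)"
      by (simp add: \<beta>_def sum_distrib_left)
    also have "(\<Sum>k\<in>{..<n}-{i}. \<alpha> k j) = 1 - \<alpha> i j"
      using sum1 j i by (simp add: sum.remove) (metis add_diff_cancel_left')
    finally show "(\<Sum>k<n. \<beta> k j) = 1" by (simp add: \<beta>_def algebra_simps)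
  next
    fix k j assume k: "k < n" and j: "j < m"
    show "0 \<le> \<beta> k j" using anz aleq1 k j e0 e1 by (auto simp: \<beta>_def)
  next
    fix k assume k: "k < n"
    show "0 \<le> \<nu> - (\<Sum>j<m. \<beta> k j * d k j)"
    proof (cases "k = i")
      case True
      have "(\<Sum>j<m. \<beta> k j * d k j) = L + e * (\<Sum>j<m. (1 - \<alpha> i j) * d i j)"
        by (simp add: True \<beta>_def L_def distrib_right sum.distrib sum_distrib_left mult.assoc)
      also have "(\<Sum>j<m. (1 - \<alpha> i j) * d i j) \<le> D"
        unfolding D_def using anz dnn i by (intro sum_mono) (simp add: algebra_simps mult_nonneg_nonneg)
      hence "L + e * (\<Sum>j<m. (1 - \<alpha> i j) * d i j) \<le> L + e * D"
        using e0 by (simp add: mult_left_mono)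
      finally show ?thesis unfolding \<nu>_def by linarith
    next
      case False
      have "(\<Sum>j<m. \<beta> k j * d k j) = (1 - e) * (\<Sum>j<m. \<alpha> k j * d k j)"
        by (simp add: False \<beta>_def sum_distrib_left mult.assoc)
      also have "\<dots> \<le> (1 - e) * \<mu>" using load k e1 by (intro mult_left_mono) auto
      finally show ?thesis unfolding \<nu>_def by linarith
    qed
  qed
  hence "\<mu> \<le> \<nu>" using opt by blast
  moreover have "\<nu> < \<mu>" unfolding \<nu>_def using e0 mu0 eD by auto
  ultimately show False by linarith
qed

theorem theorem4:
  fixes n m :: nat and sel :: "(nat \<Rightarrow> nat \<Rightarrow> real) \<Rightarrow> (nat \<Rightarrow> nat \<Rightarrow> real)"
    and t th :: "nat \<Rightarrow> nat \<Rightarrow> real" and i :: nat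
  assumes "LP_mechanism n m sel"
    and "\<forall>k<n. \<forall>j<m. t k j \<ge> 0"
    and "\<forall>k<n. \<forall>j<m. th k j \<ge> 0"
    and "i < n"
  shows "mcost m t (replace_row th i (t i)) (sel (replace_row th i (t i))) i
           \<le> mcost m t th (sel th) i"
proof -
  define d' where "d' = replace_row th i (t i)"
  have d'nn: "\<forall>k<n. \<forall>j<m. d' k j \<ge> 0" using assms(2,3) by (simp add: d'_def replace_row_def)
  obtain \<mu> where f: "lp_feasible n m th (sel th) \<mu>"
    and o: "\<forall>\<beta> \<nu>. lp_feasible n m th \<beta> \<nu> \<longrightarrow> \<mu> \<le> \<nu>"
    using assms(1,3) unfolding LP_mechanism_def lp_optimal_def by blast
  obtain \<mu>' where f': "lp_feasible n m d' (sel d') \<mu>'"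
    and o': "\<forall>\<beta> \<nu>. lp_feasible n m d' \<beta> \<nu> \<longrightarrow> \<mu>' \<le> \<nu>"
    using assms(1) d'nn unfolding LP_mechanism_def lp_optimal_def by blast
  define \<alpha> where "\<alpha> = sel th"
  define C where "C = mcost m t th \<alpha> i"
  have anz: "\<forall>k<n. \<forall>j<m. \<alpha> k j \<ge> 0" using f by (simp add: lp_feasible_def \<alpha>_def)
  have T: "\<mu> \<le> (\<Sum>j<m. \<alpha> i j * th i j)"
    using tight[OF f o assms(3,4)] by (simp add: \<alpha>_def)
  have C1: "(\<Sum>j<m. \<alpha> i j * th i j) \<le> C"
    unfolding C_def mcost_def using anz assms(4) by (intro sum_mono mult_left_mono) auto
  have C2: "(\<Sum>j<m. \<alpha> i j * t i j) \<le> C"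
    unfolding C_def mcost_def using anz assms(4) by (intro sum_mono mult_left_mono) auto
  have "lp_feasible n m d' \<alpha> C"
    unfolding lp_feasible_def
  proof (intro conjI allI impI)
    fix j assume "j < m" thus "(\<Sum>k<n. \<alpha> k j) = 1" using f by (simp add: lp_feasible_def \<alpha>_def)
  next
    fix k j assume "k < n" "j < m" thus "0 \<le> \<alpha> k j" using anz by simp
  next
    fix k assume k: "k < n"
    show "0 \<le> C - (\<Sum>j<m. \<alpha> k j * d' k j)"
    proof (cases "k = i")
      case True thus ?thesis using C2 by (simp add: d'_def replace_row_def)
    next
      case False
      have "(\<Sum>j<m. \<alpha> k j * th k j) \<le> \<mu>" using f k by (simp add: lp_feasible_def \<alpha>_def)
      thus ?thesis using False T C1 by (simp add: d'_def replace_row_def)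
    qed
  qed
  hence "\<mu>' \<le> C" using o' by blast
  moreover have "mcost m t d' (sel d') i = (\<Sum>j<m. sel d' i j * d' i j)"
    by (simp add: mcost_def d'_def replace_row_def)
  moreover have "(\<Sum>j<m. sel d' i j * d' i j) \<le> \<mu>'" using f' assms(4) by (simp add: lp_feasible_def)
  ultimately show ?thesis by (simp add: C_def \<alpha>_def d'_def)
qed

end
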